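(* Let $m\geq2$. For $0\leq k\leq q$ let $\mathcal{S}_k=\{\omega_{ij}\in\mathcal{S}: i+j\equiv k \pmod{q+1}\}$ and $W_k=\operatorname{Span}_{\mathbb{F}}\mathcal{S}_k$. Then each $W_k$ is an $\mathbb{F}[G]$-submodule of $H^0(C,\Omega_C^{\otimes m})$, and $$H^0(C,\Omega_C^{\otimes m})=\bigoplus_{k=0}^{q}W_k.$$
   Context: Let $p$ be an odd prime, $q=p^r$ ($r\geq1$), $\mathbb{F}$ algebraically closed of characteristic $p$, $C$ the Drinfeld curve $XY^q-X^qY-Z^{q+1}=0$ in $\mathbb{P}^2(\mathbb{F})$, and $G=SL_2(\mathbb{F}_q)$ acting on $C$ by $\begin{pmatrix}\alpha&\beta\\ \gamma&\delta\end{pmatrix}\cdot[X:Y:Z]=[\alpha X+\beta Y:\gamma X+\delta Y:Z]$, hence on $H^0(C,\Omega_C^{\otimes m})$ via $f(x,y)dx^{\otimes m}\cdot\sigma=f(\alpha x+\beta y,\gamma x+\delta y)d(\alpha x+\beta y)^{\otimes m}$, where $x=X/Z,y=Y/Z$. Put $\omega_{ij}=\frac{x^iy^j}{x^{mq}}dx^{\otimes m}$ and $\mathcal{S}=\{\omega_{ij}: 0\leq j\leq q-1,\ i\geq0,\ i+j\leq m(q-2)\}\cup\{\omega_{0j}: q\leq j\leq m(q-2)\}$ (a basis of $H^0(C,\Omega_C^{\otimes m})$). *)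

theory Defs
  imports "HOL-Computational_Algebra.Polynomial"
begin

(* Affine points of the Drinfeld curve  X Y^q - X^q Y - Z^(q+1) = 0  in the chart Z = 1.
   On these points x <> 0 and y <> 0 automatically. *)
definition drinfeld_pts :: "nat \<Rightarrow> ('a::field \<times> 'a) set" where
  "drinfeld_pts q = {(x, y). x * y ^ q - x ^ q * y = 1}"

(* An m-differential  f dx^{\<otimes>m}  is represented by its coefficient f, viewed as a
   function on the (Zariski dense) affine part of C; we normalise it to 0 off the curve. *)
type_synonym 'a mdiff = "'a \<times> 'a \<Rightarrow> 'a"

definition omega :: "nat \<Rightarrow> nat \<Rightarrow> nat \<Rightarrow> nat \<Rightarrow> 'a::field mdiff" where
  "omega m q i j = (\<lambda>(x, y). if (x, y) \<in> drinfeld_pts q then x ^ i * y ^ j / x ^ (m * q) else 0)"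

definition S_idx :: "nat \<Rightarrow> nat \<Rightarrow> (nat \<times> nat) set" where
  "S_idx m q = {(i, j). j \<le> q - 1 \<and> i + j \<le> m * (q - 2)}
             \<union> {(i, j). i = 0 \<and> q \<le> j \<and> j \<le> m * (q - 2)}"

definition S_set :: "nat \<Rightarrow> nat \<Rightarrow> 'a::field mdiff set" where
  "S_set m q = (\<lambda>(i, j). omega m q i j) ` S_idx m q"

definition S_part :: "nat \<Rightarrow> nat \<Rightarrow> nat \<Rightarrow> 'a::field mdiff set" where
  "S_part m q k = (\<lambda>(i, j). omega m q i j) ` {(i, j) \<in> S_idx m q. (i + j) mod (q + 1) = k}"

definition Fspan :: "'a::field mdiff set \<Rightarrow> 'a mdiff set" where
  "Fspan A = {(\<lambda>z. \<Sum>w\<in>T. c w * w z) | T c. finite T \<and> T \<subseteq> A}"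

definition H0 :: "nat \<Rightarrow> nat \<Rightarrow> 'a::field mdiff set" where
  "H0 m q = Fspan (S_set m q)"

definition W :: "nat \<Rightarrow> nat \<Rightarrow> nat \<Rightarrow> 'a::field mdiff set" where
  "W m q k = Fspan (S_part m q k)"

definition SL2q :: "nat \<Rightarrow> ('a::field \<times> 'a \<times> 'a \<times> 'a) set" where
  "SL2q q = {(a, b, c, d). a ^ q = a \<and> b ^ q = b \<and> c ^ q = c \<and> d ^ q = d \<and> a * d - b * c = 1}"

(* f(x,y) dx^m . sigma = f(ax+by, cx+dy) d(ax+by)^m, and on C one has dy = (y/x)^q dx
   (differentiate x y^q - x^q y = 1 in characteristic p), so
   d(ax+by) = (a + b (y/x)^q) dx. *)
definition act :: "nat \<Rightarrow> nat \<Rightarrow> ('a::field \<times> 'a \<times> 'a \<times> 'a) \<Rightarrow> 'a mdiff \<Rightarrow> 'a mdiff" where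
  "act m q \<sigma> f = (case \<sigma> of (a, b, c, d) \<Rightarrow>
     (\<lambda>(x, y). if (x, y) \<in> drinfeld_pts q
        then f (a * x + b * y, c * x + d * y) * (a + b * (y / x) ^ q) ^ m else 0))"

end

theory Submission
  imports Defs "HOL-Computational_Algebra.Primes"
begin


lemma Fspan_zero: "(\<lambda>_. 0) \<in> Fspan A"
  unfolding Fspan_def by (rule CollectI, rule exI[of _ "{}"], auto)

lemma Fspan_gen: "w \<in> A \<Longrightarrow> w \<in> Fspan A"
  unfolding Fspan_def by (rule CollectI, rule exI[of _ "{w}"], rule exI[of _ "\<lambda>_. 1"], auto)

lemma Fspan_add:
  assumes "f \<in> Fspan A" "g \<in> Fspan A"
  shows "(\<lambda>z. f z + g z) \<in> Fspan A"
proof -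
  obtain T1 c1 where 1: "f = (\<lambda>z. \<Sum>w\<in>T1. c1 w * w z)" "finite T1" "T1 \<subseteq> A"
    using assms(1) unfolding Fspan_def by blast
  obtain T2 c2 where 2: "g = (\<lambda>z. \<Sum>w\<in>T2. c2 w * w z)" "finite T2" "T2 \<subseteq> A"
    using assms(2) unfolding Fspan_def by blast
  define c where "c w = (if w \<in> T1 then c1 w else 0) + (if w \<in> T2 then c2 w else 0)" for w
  have "(\<lambda>z. f z + g z) = (\<lambda>z. \<Sum>w\<in>T1 \<union> T2. c w * w z)"
  proof
    fix z
    have a: "(\<Sum>w\<in>T1 \<union> T2. (if w \<in> T1 then c1 w else 0) * w z) = (\<Sum>w\<in>T1. c1 w * w z)"
      by (rule sum.mono_neutral_cong_right) (use 1 2 in auto)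
    have b: "(\<Sum>w\<in>T1 \<union> T2. (if w \<in> T2 then c2 w else 0) * w z) = (\<Sum>w\<in>T2. c2 w * w z)"
      by (rule sum.mono_neutral_cong_right) (use 1 2 in auto)
    show "f z + g z = (\<Sum>w\<in>T1 \<union> T2. c w * w z)"
      unfolding c_def distrib_right sum.distrib a b 1 2 by simp
  qed
  thus ?thesis unfolding Fspan_def using 1 2 by blast
qed

lemma Fspan_smult:
  assumes "f \<in> Fspan A"
  shows "(\<lambda>z. a * f z) \<in> Fspan A"
proof -
  obtain T1 c1 where 1: "f = (\<lambda>z. \<Sum>w\<in>T1. c1 w * w z)" "finite T1" "T1 \<subseteq> A"
    using assms(1) unfolding Fspan_def by blast
  have e: "(\<lambda>z. a * f z) = (\<lambda>z. \<Sum>w\<in>T1. (\<lambda>w. a * c1 w) w * w z)"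
    unfolding 1 by (simp add: sum_distrib_left mult.assoc)
  show ?thesis unfolding Fspan_def
    by (rule CollectI, rule exI[of _ T1], rule exI[of _ "\<lambda>w. a * c1 w"]) (use 1(2,3) e in simp)
qed

lemma Fspan_sum:
  assumes "finite I" "\<And>i. i \<in> I \<Longrightarrow> f i \<in> Fspan A"
  shows "(\<lambda>z. \<Sum>i\<in>I. f i z) \<in> Fspan A"
  using assms
proof (induction I rule: finite_induct)
  case empty
  then show ?case using Fspan_zero by simp
next
  case (insert x F)
  then show ?case using Fspan_add[of "f x" A "\<lambda>z. \<Sum>i\<in>F. f i z"] by simp
qed

lemma Fspan_mono: "A \<subseteq> B \<Longrightarrow> Fspan A \<subseteq> Fspan B"
  unfolding Fspan_def by blast

lemma Fspan_induct:
  assumes "f \<in> Fspan A" "P (\<lambda>_. 0)" "\<And>w. w \<in> A \<Longrightarrow> P w"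
    "\<And>f g. P f \<Longrightarrow> P g \<Longrightarrow> P (\<lambda>z. f z + g z)" "\<And>c f. P f \<Longrightarrow> P (\<lambda>z. c * f z)"
  shows "P f"
proof -
  obtain T c where 1: "f = (\<lambda>z. \<Sum>w\<in>T. c w * w z)" "finite T" "T \<subseteq> A"
    using assms(1) unfolding Fspan_def by blast
  have "P (\<lambda>z. \<Sum>w\<in>T. c w * w z)" using 1(2,3)
  proof (induction T rule: finite_induct)
    case empty then show ?case using assms(2) by simp
  next
    case (insert x F)
    have "P (\<lambda>z. c x * x z)" using assms(3,5) insert by auto
    then show ?case using insert assms(4)[of "\<lambda>z. c x * x z" "\<lambda>z. \<Sum>w\<in>F. c w * w z"] by simp
  qed
  thus ?thesis using 1 by simp
qed


lemma card_mset_distinct: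
  "(\<And>a. count A a \<le> 1) \<Longrightarrow> card (set_mset A) = size A"
proof (induction A)
  case empty then show ?case by simp
next
  case (add x A)
  have "count A x = 0" using add.prems[of x] by simp
  hence "x \<notin># A" by (simp add: not_in_iff)
  moreover have "count A a \<le> 1" for a using add.prems[of a] by (cases "a = x") auto
  hence "card (set_mset A) = size A" using add.IH by blast
  ultimately show ?case by simp
qed

lemma roots_unity_card:
  fixes n :: nat
  assumes "n > 0" "of_nat n \<noteq> (0::'a::alg_closed_field)"
  shows "finite {z::'a. z ^ n = 1} \<and> card {z::'a. z ^ n = 1} = n"
proof -
  define P :: "'a poly" where "P = monom 1 n + [:-1:]"
  have degP: "degree P = n" unfolding P_def using assms(1)
    by (subst degree_add_eq_left) (auto simp: degree_monom_eq)
  have P0: "P \<noteq> 0" using degP assms(1) by auto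
  have lcP: "lead_coeff P = 1" using degP assms(1) unfolding P_def by (cases n) auto
  obtain A where A: "size A = degree P" "P = smult (lead_coeff P) (\<Prod>x\<in>#A. [:-x, 1:])"
    using alg_closed_imp_factorization[OF P0] by blast
  have PA: "P = (\<Prod>x\<in>#A. [:-x, 1:])" using A(2) lcP by simp
  have polyP: "poly P z = z ^ n - 1" for z unfolding P_def by (simp add: poly_monom)
  have mem: "z \<in># A \<longleftrightarrow> z ^ n = 1" for z
  proof -
    have "poly P z = (\<Prod>x\<in>#A. poly [:-x, 1:] z)" by (subst PA) (simp add: poly_prod_mset)
    hence "poly P z = 0 \<longleftrightarrow> z \<in># A" by auto
    thus ?thesis using polyP by simp
  qed
  have cnt: "count A a \<le> 1" for a
  proof (rule ccontr)
    assume "\<not> count A a \<le> 1"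
    hence c2: "count A a \<ge> 2" by linarith
    hence "0 < count A a" by linarith
    hence "a \<in># A" by simp
    then obtain B where B: "A = add_mset a B" by (metis multi_member_split)
    have "count B a = count A a - 1" using B by simp
    hence "0 < count B a" using c2 by linarith
    hence "a \<in># B" by simp
    then obtain C where C: "B = add_mset a C" by (metis multi_member_split)
    define Q where "Q = (\<Prod>x\<in>#C. [:-x, 1:])"
    have PQ: "P = [:-a,1:] * ([:-a,1:] * Q)" using PA B C Q_def by simp
    have "poly (pderiv P) a = 0"
      unfolding PQ pderiv_mult by simp
    moreover have "pderiv P = monom (of_nat n) (n - 1)"
      unfolding P_def pderiv_add pderiv_monom by (simp add: pderiv_pCons)
    moreover have "a ^ n = 1" using mem \<open>a \<in># A\<close> by blast
    hence "a \<noteq> 0" using assms(1) by (auto simp: power_0_left)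
    ultimately show False using assms(2) by (simp add: poly_monom)
  qed
  have "set_mset A = {z. z ^ n = 1}" using mem by auto
  moreover have "card (set_mset A) = n" using card_mset_distinct[OF cnt] A(1) degP by simp
  ultimately show ?thesis by (metis finite_set_mset)
qed



lemma pts_iff: "(x, y) \<in> drinfeld_pts q \<longleftrightarrow> x * y ^ q - x ^ q * y = 1"
  by (simp add: drinfeld_pts_def)

lemma pts_x: "q > 0 \<Longrightarrow> (x, y) \<in> drinfeld_pts q \<Longrightarrow> (x::'a::field) \<noteq> 0"
  by (auto simp: pts_iff zero_power)

lemma omega_on: "(x, y) \<in> drinfeld_pts q \<Longrightarrow> omega m q i j (x, y) = x ^ i * y ^ j / x ^ (m * q)"
  by (simp add: omega_def)

lemma omega_off: "(x, y) \<notin> drinfeld_pts q \<Longrightarrow> omega m q i j (x, y) = 0"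
  by (simp add: omega_def)

lemma omega_red:
  "omega m q (Suc i) (j + q) = (\<lambda>z. (omega m q (i + q) (j + 1) z + omega m q i j z :: 'a::field))"
proof
  fix z :: "'a \<times> 'a"
  obtain x y where z: "z = (x, y)" by fastforce
  show "omega m q (Suc i) (j + q) z = omega m q (i + q) (j + 1) z + omega m q i j z"
  proof (cases "(x, y) \<in> drinfeld_pts q")
    case True
    hence c: "x * y ^ q = x ^ q * y + 1" by (simp add: pts_iff algebra_simps)
    have "x ^ Suc i * y ^ (j + q) = x ^ i * y ^ j * (x * y ^ q)" by (simp add: power_add mult_ac)
    also have "\<dots> = x ^ (i + q) * y ^ (j + 1) + x ^ i * y ^ j" unfolding c
      by (simp add: power_add algebra_simps)
    finally show ?thesis using True z by (simp add: omega_on add_divide_distrib)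
  next
    case False
    then show ?thesis using z by (simp add: omega_off)
  qed
qed

lemma S_idx_bound: "(i, j) \<in> S_idx m q \<Longrightarrow> i + j \<le> m * (q - 2)"
  by (auto simp: S_idx_def)

lemma omega_in_W:
  assumes "q \<ge> 2"
  shows "i + j \<le> m * (q - 2) \<Longrightarrow> (omega m q i j :: 'a::field mdiff) \<in> W m q ((i + j) mod (q + 1))"
proof (induction j arbitrary: i rule: less_induct)
  case (less j)
  show ?case
  proof (cases "j \<le> q - 1 \<or> i = 0")
    case True
    hence "(i, j) \<in> S_idx m q" using less.prems by (auto simp: S_idx_def)
    hence "omega m q i j \<in> (S_part m q ((i + j) mod (q + 1)) :: 'a mdiff set)"
      unfolding S_part_def by (auto intro!: image_eqI[of _ _ "(i, j)"])
    thus ?thesis unfolding W_def by (rule Fspan_gen)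
  next
    case False
    then obtain i0 where i0: "i = Suc i0" by (metis not0_implies_Suc)
    define j0 where "j0 = j - q"
    have ij: "i = Suc i0" "j = j0 + q" using False i0 unfolding j0_def by auto
    have e: "omega m q i j = (\<lambda>z. (omega m q (i0 + q) (j0 + 1) z + omega m q i0 j0 z :: 'a))"
      unfolding ij by (rule omega_red)
    have 1: "omega m q (i0 + q) (j0 + 1) \<in> (W m q ((i0 + q + (j0 + 1)) mod (q + 1)) :: 'a mdiff set)"
      using less.IH[of "j0 + 1" "i0 + q"] less.prems ij assms by auto
    have 2: "omega m q i0 j0 \<in> (W m q ((i0 + j0) mod (q + 1)) :: 'a mdiff set)"
      using less.IH[of "j0" "i0"] less.prems ij assms by auto
    have r1: "i0 + q + (j0 + 1) = i + j" using ij by simp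
    have r2: "(i0 + j0) mod (q + 1) = (i + j) mod (q + 1)"
    proof -
      have "i + j = (i0 + j0) + (q + 1)" using ij by simp
      thus ?thesis by (simp only: mod_add_self2)
    qed
    show ?thesis unfolding e using Fspan_add 1 2 r1 r2 unfolding W_def by metis
  qed
qed



lemma frob:
  fixes u v :: "'a::field"
  assumes "prime CHAR('a)" "q = CHAR('a) ^ r"
  shows "(u + v) ^ q = u ^ q + v ^ q"
  by (rule freshmans_dream'[OF assms])

lemma act_omega:
  fixes a b c d :: "'a::field"
  assumes pr: "prime CHAR('a)" and qr: "q = CHAR('a) ^ r" and q0: "q > 0"
    and sl: "(a, b, c, d) \<in> SL2q q"
  shows "act m q (a, b, c, d) (omega m q i j) =
    (\<lambda>z. \<Sum>s\<le>i. \<Sum>t\<le>j. (of_nat (i choose s) * a ^ s * b ^ (i - s) * of_nat (j choose t) * c ^ t * d ^ (j - t))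
          * omega m q (s + t) ((i - s) + (j - t)) z)"
proof
  fix z :: "'a \<times> 'a"
  obtain x y where z: "z = (x, y)" by fastforce
  have aq: "a ^ q = a" "b ^ q = b" "c ^ q = c" "d ^ q = d" and det: "a * d - b * c = 1"
    using sl by (auto simp: SL2q_def)
  show "act m q (a, b, c, d) (omega m q i j) z = (\<Sum>s\<le>i. \<Sum>t\<le>j. (of_nat (i choose s) * a ^ s * b ^ (i - s) * of_nat (j choose t) * c ^ t * d ^ (j - t))
          * omega m q (s + t) ((i - s) + (j - t)) z)"
  proof (cases "(x, y) \<in> drinfeld_pts q")
    case False
    then show ?thesis using z by (simp add: act_def omega_off)
  next
    case True
    define u where "u = a * x + b * y"
    define v where "v = c * x + d * y"
    have x0: "x \<noteq> 0" using pts_x[OF q0 True] .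
    have uq: "u ^ q = a * x ^ q + b * y ^ q" unfolding u_def
      using frob[OF pr qr] aq by (simp add: power_mult_distrib)
    have vq: "v ^ q = c * x ^ q + d * y ^ q" unfolding v_def
      using frob[OF pr qr] aq by (simp add: power_mult_distrib)
    have cur: "x * y ^ q - x ^ q * y = 1" using True by (simp add: pts_iff)
    have "u * v ^ q - u ^ q * v = (a * d - b * c) * (x * y ^ q - x ^ q * y)"
      unfolding uq vq by (simp add: u_def v_def algebra_simps)
    hence uvc: "(u, v) \<in> drinfeld_pts q" using cur det by (simp add: pts_iff)
    have u0: "u \<noteq> 0" using pts_x[OF q0 uvc] .
    have F: "a + b * (y / x) ^ q = u ^ q / x ^ q" using x0
      unfolding uq by (simp add: power_divide field_simps)
    have "act m q (a, b, c, d) (omega m q i j) z = omega m q i j (u, v) * (a + b * (y / x) ^ q) ^ m"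
      using True z unfolding act_def u_def v_def by simp
    also have "\<dots> = u ^ i * v ^ j / u ^ (m * q) * (u ^ q / x ^ q) ^ m"
      unfolding F using uvc by (simp add: omega_on)
    also have "\<dots> = u ^ i * v ^ j / x ^ (m * q)"
      using u0 x0 by (simp add: power_divide power_mult[symmetric] mult.commute)
    also have "u ^ i = (\<Sum>s\<le>i. of_nat (i choose s) * (a * x) ^ s * (b * y) ^ (i - s))"
      unfolding u_def by (rule binomial_ring)
    also have "v ^ j = (\<Sum>t\<le>j. of_nat (j choose t) * (c * x) ^ t * (d * y) ^ (j - t))"
      unfolding v_def by (rule binomial_ring)
    also have "(\<Sum>s\<le>i. of_nat (i choose s) * (a * x) ^ s * (b * y) ^ (i - s)) *
               (\<Sum>t\<le>j. of_nat (j choose t) * (c * x) ^ t * (d * y) ^ (j - t)) / x ^ (m * q)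
       = (\<Sum>s\<le>i. \<Sum>t\<le>j. of_nat (i choose s) * (a * x) ^ s * (b * y) ^ (i - s) *
               (of_nat (j choose t) * (c * x) ^ t * (d * y) ^ (j - t)) / x ^ (m * q))"
      by (simp add: sum_product sum_divide_distrib)
    also have "\<dots> = (\<Sum>s\<le>i. \<Sum>t\<le>j. (of_nat (i choose s) * a ^ s * b ^ (i - s) * of_nat (j choose t) * c ^ t * d ^ (j - t))
          * omega m q (s + t) ((i - s) + (j - t)) z)"
    proof (intro sum.cong refl)
      fix s t
      have e: "omega m q (s + t) ((i - s) + (j - t)) z = x ^ s * x ^ t * (y ^ (i - s) * y ^ (j - t)) / x ^ (m * q)"
        by (simp only: z omega_on[OF True] power_add)
      show "of_nat (i choose s) * (a * x) ^ s * (b * y) ^ (i - s) *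
               (of_nat (j choose t) * (c * x) ^ t * (d * y) ^ (j - t)) / x ^ (m * q) =
            (of_nat (i choose s) * a ^ s * b ^ (i - s) * of_nat (j choose t) * c ^ t * d ^ (j - t))
          * omega m q (s + t) ((i - s) + (j - t)) z"
        unfolding e by (simp add: power_mult_distrib mult_ac)
    qed
    finally show ?thesis .
  qed
qed

lemma act_zero: "act m q \<sigma> (\<lambda>_. 0) = (\<lambda>_. 0)"
  by (auto simp: act_def split: prod.splits)

lemma act_add: "act m q \<sigma> (\<lambda>z. f z + g z) = (\<lambda>z. act m q \<sigma> f z + act m q \<sigma> g z)"
  by (auto simp: act_def distrib_right split: prod.splits)

lemma act_smult: "act m q \<sigma> (\<lambda>z. k * f z) = (\<lambda>z. k * act m q \<sigma> f z)"
  by (auto simp: act_def mult.assoc split: prod.splits)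



lemma act_W:
  fixes \<sigma> :: "'a::field \<times> 'a \<times> 'a \<times> 'a"
  assumes pr: "prime CHAR('a)" and qr: "q = CHAR('a) ^ r" and q2: "q \<ge> 2"
    and sl: "\<sigma> \<in> SL2q q" and f: "f \<in> W m q k"
  shows "act m q \<sigma> f \<in> W m q k"
proof -
  obtain a b c d where s: "\<sigma> = (a, b, c, d)" by (cases \<sigma>) auto
  have gen: "act m q \<sigma> w \<in> W m q k" if w: "w \<in> S_part m q k" for w
  proof -
    obtain i j where ij: "(i, j) \<in> S_idx m q" "(i + j) mod (q + 1) = k" "w = omega m q i j"
      using w unfolding S_part_def by auto
    have bd: "i + j \<le> m * (q - 2)" using S_idx_bound[OF ij(1)] .
    have "act m q \<sigma> w = (\<lambda>z. \<Sum>s\<le>i. \<Sum>t\<le>j. (of_nat (i choose s) * a ^ s * b ^ (i - s) * of_nat (j choose t) * c ^ t * d ^ (j - t))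
          * omega m q (s + t) ((i - s) + (j - t)) z)"
      unfolding ij(3) s by (rule act_omega[OF pr qr]) (use q2 sl s in auto)
    also have "\<dots> \<in> W m q k"
    proof -
      have inner: "(\<lambda>z. \<Sum>t\<le>j. (of_nat (i choose s) * a ^ s * b ^ (i - s) * of_nat (j choose t) * c ^ t * d ^ (j - t))
          * omega m q (s + t) ((i - s) + (j - t)) z) \<in> W m q k" if si: "s \<in> {..i}" for s
      proof -
        have el: "(\<lambda>z. (of_nat (i choose s) * a ^ s * b ^ (i - s) * of_nat (j choose t) * c ^ t * d ^ (j - t))
          * omega m q (s + t) ((i - s) + (j - t)) z) \<in> Fspan (S_part m q k)" if st: "t \<in> {..j}" for t
        proof -
          have "s + t + ((i - s) + (j - t)) = i + j" using st si by auto
          hence "omega m q (s + t) ((i - s) + (j - t)) \<in> (W m q k :: 'a mdiff set)"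
            using omega_in_W[OF q2, of "s + t" "(i - s) + (j - t)" m] bd ij(2) by (auto simp: W_def)
          thus ?thesis unfolding W_def by (rule Fspan_smult)
        qed
        show ?thesis
          using Fspan_sum[of "{..j}" "\<lambda>t z. (of_nat (i choose s) * a ^ s * b ^ (i - s) * of_nat (j choose t) * c ^ t * d ^ (j - t))
          * omega m q (s + t) ((i - s) + (j - t)) z" "S_part m q k"] el
          unfolding W_def by simp
      qed
      show ?thesis
        using Fspan_sum[of "{..i}" "\<lambda>s z. \<Sum>t\<le>j. (of_nat (i choose s) * a ^ s * b ^ (i - s) * of_nat (j choose t) * c ^ t * d ^ (j - t))
          * omega m q (s + t) ((i - s) + (j - t)) z" "S_part m q k"] inner
        unfolding W_def by simp
    qed
    finally show ?thesis .
  qed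
  show ?thesis
    using f[unfolded W_def]
  proof (rule Fspan_induct[where P = "\<lambda>f. act m q \<sigma> f \<in> W m q k"])
    show "act m q \<sigma> (\<lambda>_. 0) \<in> W m q k" unfolding act_zero W_def by (rule Fspan_zero)
  next
    fix w :: "'a mdiff" assume "w \<in> S_part m q k" thus "act m q \<sigma> w \<in> W m q k" by (rule gen)
  next
    fix f g assume "act m q \<sigma> f \<in> W m q k" "act m q \<sigma> g \<in> W m q k"
    thus "act m q \<sigma> (\<lambda>z. f z + g z) \<in> W m q k" unfolding act_add W_def by (rule Fspan_add)
  next
    fix c f assume "act m q \<sigma> f \<in> W m q k"
    thus "act m q \<sigma> (\<lambda>z. c * f z) \<in> W m q k" unfolding act_smult W_def by (rule Fspan_smult)
  qed
qed

lemma eig: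
  fixes \<zeta> :: "'a::field"
  assumes z1: "\<zeta> ^ (q + 1) = 1" and f: "f \<in> W m q k"
  shows "f (\<zeta> * x, \<zeta> * y) = \<zeta> ^ (k + m) * f (x, y)"
proof -
  have zn: "\<zeta> \<noteq> 0" using z1 by (auto simp: zero_power)
  have "\<forall>x y. f (\<zeta> * x, \<zeta> * y) = \<zeta> ^ (k + m) * f (x, y)"
    using f unfolding W_def
  proof (rule Fspan_induct[where P = "\<lambda>f. \<forall>x y. f (\<zeta> * x, \<zeta> * y) = \<zeta> ^ (k + m) * f (x, y)"])
    fix w :: "'a mdiff" assume "w \<in> S_part m q k"
    then obtain i j where ij: "(i + j) mod (q + 1) = k" "w = omega m q i j"
      unfolding S_part_def by auto
    show "\<forall>x y. w (\<zeta> * x, \<zeta> * y) = \<zeta> ^ (k + m) * w (x, y)"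
    proof (intro allI)
      fix x y
      have "(\<zeta> * x) * (\<zeta> * y) ^ q - (\<zeta> * x) ^ q * (\<zeta> * y) = \<zeta> ^ (q + 1) * (x * y ^ q - x ^ q * y)"
        by (simp add: power_mult_distrib algebra_simps)
      hence ptz: "(\<zeta> * x, \<zeta> * y) \<in> drinfeld_pts q \<longleftrightarrow> (x, y) \<in> drinfeld_pts q"
        using z1 by (simp add: pts_iff)
      show "w (\<zeta> * x, \<zeta> * y) = \<zeta> ^ (k + m) * w (x, y)"
      proof (cases "(x, y) \<in> drinfeld_pts q")
        case False thus ?thesis using ptz ij by (simp add: omega_off)
      next
        case True
        have zk: "\<zeta> ^ (i + j) = \<zeta> ^ k"
        proof -
          define n where "n = (i + j) div (q + 1)"
          have e: "i + j = (q + 1) * n + k" unfolding n_def using ij(1) by (metis mult.commute div_mult_mod_eq)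
          have "\<zeta> ^ (i + j) = \<zeta> ^ ((q + 1) * n + k)" by (simp only: e)
          also have "\<dots> = (\<zeta> ^ (q + 1)) ^ n * \<zeta> ^ k" by (simp only: power_add[of _ "(q + 1) * n" k] power_mult)
          also have "\<dots> = \<zeta> ^ k" unfolding z1 by simp
          finally show ?thesis .
        qed
        have zm: "\<zeta> ^ (m * q) * \<zeta> ^ m = 1"
        proof -
          have "\<zeta> ^ (m * q) * \<zeta> ^ m = (\<zeta> ^ (q + 1)) ^ m"
            by (simp add: power_add[symmetric] power_mult[symmetric] algebra_simps)
          thus ?thesis using z1 by simp
        qed
        hence zm': "\<zeta> ^ m = inverse (\<zeta> ^ (m * q))" by (rule inverse_unique[symmetric])
        have "w (\<zeta> * x, \<zeta> * y) = \<zeta> ^ (i + j) * (x ^ i * y ^ j) / (\<zeta> ^ (m * q) * x ^ (m * q))"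
          using ptz True ij by (simp add: omega_on power_mult_distrib power_add mult_ac)
        also have "\<dots> = \<zeta> ^ k * \<zeta> ^ m * (x ^ i * y ^ j / x ^ (m * q))"
          unfolding zk zm' by (simp add: field_simps)
        also have "\<dots> = \<zeta> ^ (k + m) * w (x, y)"
          using True ij by (simp add: omega_on power_add)
        finally show ?thesis .
      qed
    qed
  qed (auto simp: algebra_simps)
  thus ?thesis by blast
qed



lemma uniq:
  fixes d :: "nat \<Rightarrow> 'a::field mdiff"
  assumes fin: "finite {z::'a. z ^ (q + 1) = 1}" and card: "card {z::'a. z ^ (q + 1) = 1} = q + 1"
    and dW: "\<And>k. k \<le> q \<Longrightarrow> d k \<in> W m q k" and s0: "\<And>z. (\<Sum>k\<le>q. d k z) = 0"
    and kq: "k \<le> q"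
  shows "d k = (\<lambda>_. 0)"
proof
  fix z :: "'a \<times> 'a"
  obtain x y where z: "z = (x, y)" by fastforce
  define R :: "'a poly" where "R = (\<Sum>k\<le>q. monom (d k (x, y)) k)"
  have cR: "coeff R n = (if n \<le> q then d n (x, y) else 0)" for n
    unfolding R_def coeff_sum coeff_monom by (simp add: sum.delta)
  have pR: "poly R \<zeta> = (\<Sum>k\<le>q. d k (x, y) * \<zeta> ^ k)" for \<zeta>
    unfolding R_def poly_sum poly_monom ..
  have roots: "{\<zeta>::'a. \<zeta> ^ (q + 1) = 1} \<subseteq> {\<zeta>. poly R \<zeta> = 0}"
  proof
    fix \<zeta> :: 'a assume "\<zeta> \<in> {\<zeta>. \<zeta> ^ (q + 1) = 1}"
    hence z1: "\<zeta> ^ (q + 1) = 1" by simp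
    have zn: "\<zeta> \<noteq> 0" using z1 by (auto simp: zero_power)
    have "0 = (\<Sum>k\<le>q. d k (\<zeta> * x, \<zeta> * y))" using s0 by simp
    also have "\<dots> = (\<Sum>k\<le>q. \<zeta> ^ m * (d k (x, y) * \<zeta> ^ k))"
      by (intro sum.cong refl) (simp add: eig[OF z1 dW] power_add mult_ac)
    also have "\<dots> = \<zeta> ^ m * poly R \<zeta>" unfolding pR sum_distrib_left ..
    finally show "\<zeta> \<in> {\<zeta>. poly R \<zeta> = 0}" using zn by simp
  qed
  have "R = 0"
  proof (rule ccontr)
    assume R0: "R \<noteq> 0"
    have "degree R \<le> q" by (rule degree_le) (simp add: cR)
    have "q + 1 \<le> card {\<zeta>. poly R \<zeta> = 0}"
      using card_mono[OF poly_roots_finite[OF R0] roots] card by simp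
    also have "\<dots> \<le> degree R" by (rule card_poly_roots_bound[OF R0])
    finally show False using \<open>degree R \<le> q\<close> by simp
  qed
  hence "coeff R k = 0" by simp
  thus "d k z = 0" using cR kq z by simp
qed



theorem mainTheorem4:
  fixes p r q m :: nat
  assumes "prime p" and "odd p" and "r \<ge> 1" and "q = p ^ r"
    and "CHAR('a::alg_closed_field) = p"
    and "m \<ge> 2"
  shows "(\<forall>k\<le>q.
            W m q k \<subseteq> (H0 m q :: 'a mdiff set)
          \<and> (\<lambda>_. 0) \<in> (W m q k :: 'a mdiff set)
          \<and> (\<forall>f::'a mdiff\<in>W m q k. \<forall>g\<in>W m q k. (\<lambda>z. f z + g z) \<in> W m q k)
          \<and> (\<forall>c::'a. \<forall>f\<in>W m q k. (\<lambda>z. c * f z) \<in> W m q k)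
          \<and> (\<forall>\<sigma>\<in>(SL2q q :: ('a \<times> 'a \<times> 'a \<times> 'a) set). \<forall>f\<in>W m q k. act m q \<sigma> f \<in> W m q k))
       \<and> (\<forall>h\<in>(H0 m q :: 'a mdiff set). \<exists>!w :: nat \<Rightarrow> 'a mdiff.
            (\<forall>k\<le>q. w k \<in> W m q k) \<and> (\<forall>k>q. w k = (\<lambda>_. 0))
            \<and> h = (\<lambda>z. \<Sum>k\<le>q. w k z))"
proof -
  have p2: "p \<ge> 2" using assms(1) by (simp add: prime_ge_2_nat)
  have p3: "p \<ge> 3" using p2 assms(2) by (cases "p = 2") auto
  have "p ^ 1 \<le> p ^ r" using assms(3) p2 by (intro power_increasing) auto
  hence q3: "q \<ge> 3" using p3 assms(4) by simp
  hence q2: "q \<ge> 2" by simp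
  have pr: "prime CHAR('a)" using assms(1,5) by simp
  have qr: "q = CHAR('a) ^ r" using assms(4,5) by simp
  have nz: "of_nat (q + 1) \<noteq> (0::'a)"
  proof
    assume "of_nat (q + 1) = (0::'a)"
    hence "CHAR('a) dvd q + 1" by (simp only: of_nat_eq_0_iff_char_dvd)
    hence "p dvd q + 1" using assms(5) by simp
    moreover have "p dvd q" using assms(3,4) by (simp add: dvd_power)
    ultimately have "p dvd 1" by (metis dvd_add_right_iff)
    thus False using assms(1) by simp
  qed
  have RU: "finite {z::'a. z ^ (q + 1) = 1} \<and> card {z::'a. z ^ (q + 1) = 1} = q + 1"
    by (rule roots_unity_card) (use nz in auto)
  have part1: "W m q k \<subseteq> (H0 m q :: 'a mdiff set)
          \<and> (\<lambda>_. 0) \<in> (W m q k :: 'a mdiff set)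
          \<and> (\<forall>f::'a mdiff\<in>W m q k. \<forall>g\<in>W m q k. (\<lambda>z. f z + g z) \<in> W m q k)
          \<and> (\<forall>c::'a. \<forall>f\<in>W m q k. (\<lambda>z. c * f z) \<in> W m q k)
          \<and> (\<forall>\<sigma>\<in>(SL2q q :: ('a \<times> 'a \<times> 'a \<times> 'a) set). \<forall>f\<in>W m q k. act m q \<sigma> f \<in> W m q k)" for k
  proof (intro conjI ballI allI)
    have "S_part m q k \<subseteq> (S_set m q :: 'a mdiff set)" unfolding S_part_def S_set_def by auto
    thus "W m q k \<subseteq> (H0 m q :: 'a mdiff set)" unfolding W_def H0_def by (rule Fspan_mono)
  next
    show "(\<lambda>_. 0) \<in> (W m q k :: 'a mdiff set)" unfolding W_def by (rule Fspan_zero)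
  next
    fix f g :: "'a mdiff" assume "f \<in> W m q k" "g \<in> W m q k"
    thus "(\<lambda>z. f z + g z) \<in> W m q k" unfolding W_def by (rule Fspan_add)
  next
    fix c :: 'a and f :: "'a mdiff" assume "f \<in> W m q k"
    thus "(\<lambda>z. c * f z) \<in> W m q k" unfolding W_def by (rule Fspan_smult)
  next
    fix \<sigma> :: "'a \<times> 'a \<times> 'a \<times> 'a" and f :: "'a mdiff"
    assume "\<sigma> \<in> SL2q q" "f \<in> W m q k"
    thus "act m q \<sigma> f \<in> W m q k" by (intro act_W[OF pr qr q2])
  qed
  have part2: "\<exists>!w :: nat \<Rightarrow> 'a mdiff.
            (\<forall>k\<le>q. w k \<in> W m q k) \<and> (\<forall>k>q. w k = (\<lambda>_. 0))
            \<and> h = (\<lambda>z. \<Sum>k\<le>q. w k z)" if hH: "h \<in> (H0 m q :: 'a mdiff set)" for h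
  proof (rule ex_ex1I)
    obtain T c where T: "h = (\<lambda>z. \<Sum>w\<in>T. c w * w z)" "finite T" "T \<subseteq> S_set m q"
      using hH unfolding H0_def Fspan_def by blast
    have ex: "\<exists>k. k \<le> q \<and> w \<in> S_part m q k" if "w \<in> T" for w
    proof -
      obtain i j where ij: "(i, j) \<in> S_idx m q" "w = omega m q i j"
        using T(3) \<open>w \<in> T\<close> unfolding S_set_def by auto
      have "w \<in> S_part m q ((i + j) mod (q + 1))"
        unfolding S_part_def ij(2) using ij(1) by (auto intro!: image_eqI[of _ _ "(i, j)"])
      moreover have "(i + j) mod (q + 1) \<le> q" by (simp add: less_Suc_eq_le[symmetric])
      ultimately show ?thesis by blast
    qed
    define kf where "kf w = (SOME k. k \<le> q \<and> w \<in> (S_part m q k :: 'a mdiff set))" for w :: "'a mdiff"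
    have kf: "kf w \<le> q \<and> w \<in> S_part m q (kf w)" if "w \<in> T" for w
      unfolding kf_def using someI_ex[OF ex[OF that]] .
    define wk where "wk k = (if k \<le> q then (\<lambda>z. \<Sum>w\<in>{w\<in>T. kf w = k}. c w * w z) else (\<lambda>_. 0))" for k
    have "(\<forall>k\<le>q. wk k \<in> W m q k)"
    proof (intro allI impI)
      fix k assume "k \<le> q"
      have "{w\<in>T. kf w = k} \<subseteq> S_part m q k" using kf by auto
      moreover have "finite {w\<in>T. kf w = k}" using T(2) by simp
      ultimately show "wk k \<in> W m q k" using \<open>k \<le> q\<close> unfolding wk_def W_def Fspan_def by auto
    qed
    moreover have "\<forall>k>q. wk k = (\<lambda>_. 0)" unfolding wk_def by simp
    moreover have "h = (\<lambda>z. \<Sum>k\<le>q. wk k z)"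
    proof
      fix z
      have "(\<Sum>k\<le>q. wk k z) = (\<Sum>k\<le>q. \<Sum>w\<in>{w\<in>T. kf w = k}. c w * w z)"
        unfolding wk_def by simp
      also have "\<dots> = (\<Sum>w\<in>T. c w * w z)"
        by (rule sum.group) (use T(2) kf in auto)
      finally show "h z = (\<Sum>k\<le>q. wk k z)" using T(1) by simp
    qed
    ultimately show "\<exists>w. (\<forall>k\<le>q. w k \<in> W m q k) \<and> (\<forall>k>q. w k = (\<lambda>_. 0)) \<and> h = (\<lambda>z. \<Sum>k\<le>q. w k z)"
      by blast
  next
    fix w1 w2 :: "nat \<Rightarrow> 'a mdiff"
    assume w1: "(\<forall>k\<le>q. w1 k \<in> W m q k) \<and> (\<forall>k>q. w1 k = (\<lambda>_. 0)) \<and> h = (\<lambda>z. \<Sum>k\<le>q. w1 k z)"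
      and w2: "(\<forall>k\<le>q. w2 k \<in> W m q k) \<and> (\<forall>k>q. w2 k = (\<lambda>_. 0)) \<and> h = (\<lambda>z. \<Sum>k\<le>q. w2 k z)"
    define d where "d k = (\<lambda>z. w1 k z + (- 1) * w2 k z)" for k
    have dW: "d k \<in> W m q k" if "k \<le> q" for k
      unfolding d_def W_def
      by (rule Fspan_add, use w1 that in \<open>simp add: W_def\<close>, rule Fspan_smult, use w2 that in \<open>simp add: W_def\<close>)
    have s0: "(\<Sum>k\<le>q. d k z) = 0" for z
    proof -
      have "(\<Sum>k\<le>q. d k z) = (\<Sum>k\<le>q. w1 k z) - (\<Sum>k\<le>q. w2 k z)"
        unfolding d_def by (simp add: sum_subtractf)
      also have "\<dots> = h z - h z" using w1 w2 by metis
      finally show ?thesis by simp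
    qed
    show "w1 = w2"
    proof
      fix k
      show "w1 k = w2 k"
      proof (cases "k \<le> q")
        case True
        have "d k = (\<lambda>_. 0)" using uniq[of q d m k] RU dW s0 True by blast
        show ?thesis
        proof
          fix z
          have "d k z = 0" using fun_cong[OF \<open>d k = (\<lambda>_. 0)\<close>, of z] by (simp only:)
          hence "w1 k z + (-1) * w2 k z = 0" unfolding d_def .
          hence "w1 k z - w2 k z = 0" by (simp only: mult_minus1 diff_conv_add_uminus)
          thus "w1 k z = w2 k z" by (rule right_minus_eq[THEN iffD1])
        qed
      next
        case False thus ?thesis using w1 w2 by simp
      qed
    qed
  qed
  show ?thesis
    apply (rule conjI)
     apply (intro allI impI)
     apply (rule part1)
    apply (intro ballI)
    apply (rule part2)
    apply assumption
    done
qed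


end
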